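(* Let $k$ be a field of characteristic $2$ and $n$ a positive even integer. Then the symmetric bilinear form $\phi^{\mathrm{odd}}_n$ is identically zero, and the nondegenerate part of the symmetric bilinear form $\phi^{\mathrm{even}}_n$ is isomorphic to the orthogonal sum of $2^{s(n)-1}$ copies of $\langle 1 \rangle$.
   Context: $\langle \alpha_1,\dots,\alpha_m\rangle$ denotes the symmetric bilinear form $(x,y)\mapsto x^tAy$ on $k^m$ with $A$ diagonal with entries $\alpha_i$. Define $\phi^{\mathrm{odd}}_n := \bigoplus_{0 \le i < n/2,\ i \text{ odd}} \langle \binom{n}{i}\rangle$ and $\phi^{\mathrm{even}}_n := \bigoplus_{0 \le i < n/2,\ i \text{ even}} \langle \binom{n}{i}\rangle$, binomial coefficients viewed in $k$. The nondegenerate part of a symmetric bilinear form on $V$ is the induced nondegenerate form on $V$ modulo its radical. $s(n)$ is the number of 1's in the binary expansion of $n$. *)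

theory Defs
  imports Main
begin

text \<open>Vectors of k^m: functions nat => k vanishing from index m on.\<close>
definition kvec :: "nat \<Rightarrow> (nat \<Rightarrow> 'k::field) set" where
  "kvec m = {x. \<forall>i\<ge>m. x i = 0}"

definition diag_form :: "'k::field list \<Rightarrow> (nat \<Rightarrow> 'k) \<Rightarrow> (nat \<Rightarrow> 'k) \<Rightarrow> 'k" where
  "diag_form a x y = (\<Sum>i<length a. x i * (a ! i) * y i)"

fun bitcount :: "nat \<Rightarrow> nat" where
  "bitcount n = (if n = 0 then 0 else n mod 2 + bitcount (n div 2))"

text \<open>Coefficient lists of phi_odd n and phi_even n (indices 0 <= i < n/2, in increasing order).\<close>
definition phi_odd :: "nat \<Rightarrow> 'k::field list" where
  "phi_odd n = map (\<lambda>i. of_nat (n choose i)) (filter (\<lambda>i. odd i \<and> 2 * i < n) [0..<n])"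

definition phi_even :: "nat \<Rightarrow> 'k::field list" where
  "phi_even n = map (\<lambda>i. of_nat (n choose i)) (filter (\<lambda>i. even i \<and> 2 * i < n) [0..<n])"

definition radical :: "('v \<Rightarrow> 'v \<Rightarrow> 'k::field) \<Rightarrow> 'v set \<Rightarrow> 'v set" where
  "radical B V = {x \<in> V. \<forall>y\<in>V. B x y = 0}"

text \<open>The nondegenerate part (V / rad B, with induced form) of the form B on k^m is isomorphic
  to the form C on k^r: equivalently (universal property of the quotient), there is a
  k-linear surjection f : k^m -> k^r whose kernel is exactly the radical and which
  carries B to C.\<close>
definition nondeg_part_iso ::
  "nat \<Rightarrow> ((nat \<Rightarrow> 'k) \<Rightarrow> (nat \<Rightarrow> 'k) \<Rightarrow> 'k::field) \<Rightarrow> nat \<Rightarrow> ((nat \<Rightarrow> 'k) \<Rightarrow> (nat \<Rightarrow> 'k) \<Rightarrow> 'k) \<Rightarrow> bool"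
  where
  "nondeg_part_iso m B r C \<longleftrightarrow>
     (\<exists>f. (\<forall>x\<in>kvec m. f x \<in> kvec r)
        \<and> (\<forall>x\<in>kvec m. \<forall>y\<in>kvec m. f (\<lambda>i. x i + y i) = (\<lambda>i. f x i + f y i))
        \<and> (\<forall>c. \<forall>x\<in>kvec m. f (\<lambda>i. c * x i) = (\<lambda>i. c * f x i))
        \<and> f ` kvec m = kvec r
        \<and> {x \<in> kvec m. f x = (\<lambda>i. 0)} = radical B (kvec m)
        \<and> (\<forall>x\<in>kvec m. \<forall>y\<in>kvec m. B x y = C (f x) (f y)))"

end

theory Submission
  imports Defs
begin


declare bitcount.simps[simp del]

lemma bc0: "bitcount 0 = 0" by (subst bitcount.simps) simp
lemma bcpos: "n > 0 \<Longrightarrow> bitcount n = n mod 2 + bitcount (n div 2)" by (subst bitcount.simps) simp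

lemma par_add: "odd a = odd c \<Longrightarrow> odd b = odd d \<Longrightarrow> odd (a+b) = odd ((c::nat)+d)"
  by auto

lemma par_same: "odd a = odd c \<Longrightarrow> odd b = odd c \<Longrightarrow> even (a+(b::nat))"
  by auto

lemma binom_par:
  "\<forall>j. (odd ((2*m) choose (2*j)) \<longleftrightarrow> odd (m choose j)) \<and> even ((2*m) choose (2*j+1))"
proof (induction m)
  case 0
  show ?case
  proof
    fix j show "(odd ((2*0) choose (2*j)) \<longleftrightarrow> odd (0 choose j)) \<and> even ((2*0) choose (2*j+1))"
      by (cases j) simp_all
  qed
next
  case (Suc m)
  have q1: "odd ((2*m+1) choose (2*j)) \<longleftrightarrow> odd (m choose j)" for j
  proof (cases j)
    case 0 then show ?thesis by simp
  next
    case (Suc j')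
    have "(2*m+1) choose (2*j) = ((2*m) choose (2*j'+1)) + ((2*m) choose (2*j))"
      using Suc by (simp add: numeral_2_eq_2)
    then show ?thesis using Suc.IH by simp
  qed
  have q2: "odd ((2*m+1) choose (2*j+1)) \<longleftrightarrow> odd (m choose j)" for j
  proof -
    have "(2*m+1) choose (2*j+1) = ((2*m) choose (2*j)) + ((2*m) choose (2*j+1))"
      by simp
    then show ?thesis using Suc.IH by simp
  qed
  show ?case
  proof
    fix j
    have e1: "(2*Suc m) choose (2*j+1) = ((2*m+1) choose (2*j)) + ((2*m+1) choose (2*j+1))"
      by simp
    have "odd ((2*Suc m) choose (2*j)) \<longleftrightarrow> odd (Suc m choose j)"
    proof (cases j)
      case 0 then show ?thesis by simp
    next
      case (Suc j')
      have "(2*Suc m) choose (2*j) = ((2*m+1) choose (2*j'+1)) + ((2*m+1) choose (2*Suc j'))"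
        using Suc by (simp add: numeral_2_eq_2)
      moreover have "Suc m choose j = (m choose j') + (m choose Suc j')" using Suc by simp
      ultimately show ?thesis using par_add[OF q2[of j'] q1[of "Suc j'"]] by simp
    qed
    moreover have "even ((2*Suc m) choose (2*j+1))" unfolding e1 by (rule par_same[OF q1[of j] q2[of j]])
    ultimately show "(odd ((2*Suc m) choose (2*j)) \<longleftrightarrow> odd (Suc m choose j)) \<and> even ((2*Suc m) choose (2*j+1))"
      by blast
  qed
qed

definition T :: "nat \<Rightarrow> nat" where "T n = card {k. k \<le> n \<and> odd (n choose k)}"

lemma T_even: "T (2*m) = T m"
proof -
  let ?X = "{j. j \<le> m \<and> odd (m choose j)}"
  have S: "{k. k \<le> 2*m \<and> odd ((2*m) choose k)} = (\<lambda>j. 2*j) ` ?X"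
  proof (rule set_eqI, rule iffI)
    fix k assume k: "k \<in> {k. k \<le> 2*m \<and> odd ((2*m) choose k)}"
    obtain j where "k = 2*j \<or> k = 2*j+1" by (metis dvd_mult_div_cancel odd_two_times_div_two_succ)
    then show "k \<in> (\<lambda>j. 2*j) ` ?X"
    proof
      assume kj: "k = 2*j"
      then have "j \<in> ?X" using k binom_par[of m] by auto
      then show ?thesis using kj by blast
    next
      assume "k = 2*j+1"
      then have False using k binom_par[of m] by auto
      then show ?thesis ..
    qed
  next
    fix k assume "k \<in> (\<lambda>j. 2*j) ` ?X"
    then obtain j where j: "j \<in> ?X" "k = 2*j" by blast
    then show "k \<in> {k. k \<le> 2*m \<and> odd ((2*m) choose k)}" using binom_par[of m] by auto
  qed
  have inj: "inj_on (\<lambda>j. 2*j) ?X" by (simp add: inj_on_def)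
  show ?thesis unfolding T_def S card_image[OF inj] ..
qed

lemma T_odd: "T (2*m+1) = 2 * T m"
proof -
  let ?X = "{j. j \<le> m \<and> odd (m choose j)}"
  have par: "odd ((2*m+1) choose (2*j)) \<longleftrightarrow> odd (m choose j)"
       "odd ((2*m+1) choose (2*j+1)) \<longleftrightarrow> odd (m choose j)" for j
  proof -
    show "odd ((2*m+1) choose (2*j)) \<longleftrightarrow> odd (m choose j)"
    proof (cases j)
      case 0 then show ?thesis by simp
    next
      case (Suc j')
      have "(2*m+1) choose (2*j) = ((2*m) choose (2*j'+1)) + ((2*m) choose (2*j))"
        using Suc by (simp add: numeral_2_eq_2)
      then show ?thesis using binom_par[of m] by simp
    qed
    have "(2*m+1) choose (2*j+1) = ((2*m) choose (2*j)) + ((2*m) choose (2*j+1))"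
      by simp
    then show "odd ((2*m+1) choose (2*j+1)) \<longleftrightarrow> odd (m choose j)" using binom_par[of m] by simp
  qed
  have S: "{k. k \<le> 2*m+1 \<and> odd ((2*m+1) choose k)} = (\<lambda>j. 2*j) ` ?X \<union> (\<lambda>j. 2*j+1) ` ?X"
  proof (rule set_eqI, rule iffI)
    fix k assume k: "k \<in> {k. k \<le> 2*m+1 \<and> odd ((2*m+1) choose k)}"
    obtain j where "k = 2*j \<or> k = 2*j+1" by (metis dvd_mult_div_cancel odd_two_times_div_two_succ)
    then show "k \<in> (\<lambda>j. 2*j) ` ?X \<union> (\<lambda>j. 2*j+1) ` ?X"
    proof
      assume kj: "k = 2*j"
      then have "j \<in> ?X" using k par(1)[of j] by auto
      then show ?thesis using kj by blast
    next
      assume kj: "k = 2*j+1"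
      then have "j \<in> ?X" using k par(2)[of j] by auto
      then show ?thesis using kj by blast
    qed
  next
    fix k assume "k \<in> (\<lambda>j. 2*j) ` ?X \<union> (\<lambda>j. 2*j+1) ` ?X"
    then obtain j where "j \<in> ?X" "k = 2*j \<or> k = 2*j+1" by blast
    then show "k \<in> {k. k \<le> 2*m+1 \<and> odd ((2*m+1) choose k)}" using par[of j] by auto
  qed
  have D: "(\<lambda>j. 2*j) ` ?X \<inter> (\<lambda>j. 2*j+1) ` ?X = {}" by auto presburger
  have F: "finite ?X" by simp
  have inj1: "inj_on (\<lambda>j. 2*j) ?X" by (simp add: inj_on_def)
  have inj2: "inj_on (\<lambda>j. 2*j+1) ?X" by (simp add: inj_on_def)
  have "T (2*m+1) = card ((\<lambda>j. 2*j) ` ?X) + card ((\<lambda>j. 2*j+1) ` ?X)"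
    unfolding T_def S by (rule card_Un_disjoint) (use F D in auto)
  also have "\<dots> = 2 * T m" unfolding card_image[OF inj1] card_image[OF inj2] T_def by simp
  finally show ?thesis .
qed

lemma T_bitcount: "T n = 2 ^ bitcount n"
proof (induction n rule: less_induct)
  case (less n)
  show ?case
  proof (cases "n = 0")
    case True
    have "{k. k \<le> 0 \<and> odd (0 choose k)} = {0::nat}" by auto
    then show ?thesis using True by (simp add: T_def bc0)
  next
    case False
    show ?thesis
    proof (cases "even n")
      case True
      then obtain m where m: "n = 2*m" by blast
      with False have "m < n" "m > 0" by simp_all
      then have "T m = 2 ^ bitcount m" using less.IH by blast
      moreover have "bitcount n = bitcount m" using m \<open>m > 0\<close> bcpos[of n] by simp
      ultimately show ?thesis using m by (simp add: T_even)
    next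
      case False': False
      then obtain m where m: "n = 2*m+1" using oddE by blast
      then have "m < n" by simp
      then have "T m = 2 ^ bitcount m" using less.IH by blast
      moreover have "bitcount n = Suc (bitcount m)" using m bcpos[of n] by simp
      ultimately show ?thesis using m T_odd[of m] by simp
    qed
  qed
qed

lemma count_half:
  assumes "n > 0"
  shows "card {i. 2*i < n \<and> odd (n choose i)} = 2 ^ (bitcount n - 1)"
proof -
  define A where "A = {i. 2*i < n \<and> odd (n choose i)}"
  define B where "B = {i. n < 2*i \<and> i \<le> n \<and> odd (n choose i)}"
  define M where "M = {i. 2*i = n \<and> odd (n choose i)}"
  have fA: "finite A" unfolding A_def by (rule finite_subset[of _ "{..<n}"]) auto
  have fB: "finite B" unfolding B_def by (rule finite_subset[of _ "{..n}"]) auto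
  have fM: "finite M" and cM: "card M \<le> 1"
  proof -
    have "M \<subseteq> {n div 2}" unfolding M_def by auto
    then show "finite M" "card M \<le> 1" using finite_subset card_mono
      by (metis finite.emptyI finite.insertI, metis card_mono finite.emptyI finite.insertI is_singletonI is_singleton_altdef)
  qed
  have full: "{k. k \<le> n \<and> odd (n choose k)} = A \<union> B \<union> M"
    unfolding A_def B_def M_def by auto
  have BA: "B = (\<lambda>i. n - i) ` A"
  proof (rule set_eqI, rule iffI)
    fix j assume j: "j \<in> B"
    then have "n - j \<in> A" unfolding A_def B_def using binomial_symmetric[of j n] by auto
    moreover have "j = n - (n - j)" using j unfolding B_def by auto
    ultimately show "j \<in> (\<lambda>i. n - i) ` A" by blast
  next
    fix j assume "j \<in> (\<lambda>i. n - i) ` A"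
    then obtain i where i: "i \<in> A" "j = n - i" by blast
    then show "j \<in> B" unfolding A_def B_def using binomial_symmetric[of i n] by auto
  qed
  have "inj_on (\<lambda>i. n - i) A" unfolding A_def inj_on_def by auto
  then have cB: "card B = card A" using BA card_image by metis
  have "T n = card A + card B + card M"
    unfolding T_def full
    by (subst card_Un_disjoint, use fA fB fM in simp, use fA fB fM in simp,
        force simp: A_def B_def M_def, subst card_Un_disjoint, use fA fB in simp, use fA fB in simp,
        force simp: A_def B_def, simp)
  then have eq: "2 ^ bitcount n = 2 * card A + card M" using cB T_bitcount by simp
  have "{0, n} \<subseteq> {k. k \<le> n \<and> odd (n choose k)}" by auto
  then have "card {0, n} \<le> T n" unfolding T_def by (rule card_mono[rotated]) auto
  then have "2 \<le> (2::nat) ^ bitcount n" using assms T_bitcount by simp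
  then have "bitcount n \<noteq> 0" by (metis one_less_numeral_iff power_0 semiring_norm(76) verit_comp_simplify1(3))
  then have "(2::nat) ^ bitcount n = 2 * 2 ^ (bitcount n - 1)" by (metis power_eq_if)
  with eq cM show ?thesis unfolding A_def by presburger
qed



lemma nondeg_01:
  fixes a :: "'k::field list"
  assumes a01: "\<forall>i<length a. a!i = 0 \<or> a!i = 1"
  shows "nondeg_part_iso (length a) (diag_form a) (card {i. i < length a \<and> a!i = 1})
           (diag_form (replicate (card {i. i < length a \<and> a!i = 1}) 1))"
proof -
  define m where "m = length a"
  define L where "L = filter (\<lambda>i. a!i = 1) [0..<m]"
  define r where "r = length L"
  have setL: "set L = {i. i < m \<and> a!i = 1}" unfolding L_def by auto
  have dL: "distinct L" unfolding L_def by simp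
  have rc: "card {i. i < length a \<and> a!i = 1} = r"
    using distinct_card[OF dL] setL unfolding r_def m_def by simp
  have Lm: "L!j < m" "a!(L!j) = 1" if "j < r" for j
    using nth_mem[of j L] that setL unfolding r_def by auto
  have injL: "inj_on (nth L) {..<r}" using dL inj_on_nth[of L "{..<r}"] unfolding r_def by simp
  have imL: "nth L ` {..<r} = set L" unfolding r_def by (auto simp: set_conv_nth)
  define f where "f x = (\<lambda>j. if j < r then x (L!j) else (0::'k))" for x :: "nat \<Rightarrow> 'k"
  have key: "diag_form a x y = (\<Sum>j<r. x (L!j) * y (L!j))" for x y
  proof -
    have "diag_form a x y = (\<Sum>i<m. if a!i = 1 then x i * y i else 0)"
      unfolding diag_form_def m_def
      by (rule sum.cong) (use a01 in auto)
    also have "\<dots> = (\<Sum>i\<in>{i\<in>{..<m}. a!i = 1}. x i * y i)"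
      by (rule sum.inter_filter[symmetric]) simp
    also have "{i\<in>{..<m}. a!i = 1} = set L" using setL by auto
    also have "(\<Sum>i\<in>set L. x i * y i) = (\<Sum>j<r. x (L!j) * y (L!j))"
      unfolding imL[symmetric] by (subst sum.reindex[OF injL]) simp
    finally show ?thesis .
  qed
  have keyC: "diag_form (replicate r 1) (f x) (f y) = (\<Sum>j<r. x (L!j) * y (L!j))" for x y
    unfolding diag_form_def f_def by simp
  have f0: "f x = (\<lambda>i. 0) \<longleftrightarrow> (\<forall>j<r. x (L!j) = 0)" for x
    unfolding f_def fun_eq_iff by auto
  have g1: "\<forall>x\<in>kvec m. f x \<in> kvec r" unfolding f_def kvec_def by simp
  have g2: "\<forall>x\<in>kvec m. \<forall>y\<in>kvec m. f (\<lambda>i. x i + y i) = (\<lambda>i. f x i + f y i)"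
    unfolding f_def by auto
  have g3: "\<forall>c. \<forall>x\<in>kvec m. f (\<lambda>i. c * x i) = (\<lambda>i. c * f x i)" unfolding f_def by auto
  have g4: "f ` kvec m = kvec r"
    proof
      show "f ` kvec m \<subseteq> kvec r" unfolding f_def kvec_def by auto
    next
      show "kvec r \<subseteq> f ` kvec m"
      proof
        fix z :: "nat \<Rightarrow> 'k" assume z: "z \<in> kvec r"
        define x where "x i = (if i \<in> set L then z (the_inv_into {..<r} (nth L) i) else 0)" for i
        have "x \<in> kvec m" unfolding kvec_def x_def using setL by auto
        moreover have "f x = z"
        proof
          fix j show "f x j = z j"
          proof (cases "j < r")
            case True
            then have "L!j \<in> set L" unfolding r_def by simp
            moreover have "the_inv_into {..<r} (nth L) (L!j) = j"
              using the_inv_into_f_f[OF injL] True by simp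
            ultimately show ?thesis using True unfolding f_def x_def by simp
          next
            case False then show ?thesis using z unfolding f_def kvec_def by simp
          qed
        qed
        ultimately show "z \<in> f ` kvec m" by blast
      qed
    qed
  have g5: "{x \<in> kvec m. f x = (\<lambda>i. 0)} = radical (diag_form a) (kvec m)"
    proof (rule set_eqI, rule iffI)
      fix x assume "x \<in> {x \<in> kvec m. f x = (\<lambda>i. 0)}"
      then have "x \<in> kvec m" "\<forall>j<r. x (L!j) = 0" using f0 by auto
      then show "x \<in> radical (diag_form a) (kvec m)" unfolding radical_def key by simp
    next
      fix x assume x: "x \<in> radical (diag_form a) (kvec m)"
      have "x (L!j) = 0" if j: "j < r" for j
      proof -
        define y where "y k = (if k = L!j then 1 else (0::'k))" for k
        have "y \<in> kvec m" unfolding kvec_def y_def using Lm[OF j] by auto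
        then have "diag_form a x y = 0" using x unfolding radical_def by auto
        moreover have "diag_form a x y = (\<Sum>j'<r. if j' = j then x (L!j) else 0)"
          unfolding key
        proof (rule sum.cong)
          fix j' assume "j' \<in> {..<r}"
          then have "L!j' = L!j \<longleftrightarrow> j' = j" using nth_eq_iff_index_eq[OF dL] j unfolding r_def by auto
          then show "x (L!j') * y (L!j') = (if j' = j then x (L!j) else 0)" unfolding y_def by auto
        qed simp
        ultimately show ?thesis using j by simp
      qed
      then show "x \<in> {x \<in> kvec m. f x = (\<lambda>i. 0)}" using x f0 unfolding radical_def by auto
    qed
  have g6: "\<forall>x\<in>kvec m. \<forall>y\<in>kvec m. diag_form a x y = diag_form (replicate r 1) (f x) (f y)"
    unfolding key keyC by simp
  show ?thesis
    unfolding nondeg_part_iso_def m_def[symmetric] rc[unfolded m_def[symmetric]]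
    using g1 g2 g3 g4 g5 g6 by blast
qed


lemma char2_of_nat:
  assumes char2: "CHAR('k::field) = 2"
  shows "(of_nat c :: 'k) = (if odd c then 1 else 0)"
proof (cases "odd c")
  case True
  then have c: "c = 2 * (c div 2) + 1" by simp
  have "(of_nat (2 * (c div 2)) :: 'k) = 0" using char2 by (simp only: of_nat_eq_0_iff_char_dvd) simp
  then have "(of_nat c :: 'k) = 1" by (subst c, simp only: of_nat_add of_nat_1) simp
  then show ?thesis using True by simp
next
  case False
  then show ?thesis using char2 by (simp add: of_nat_eq_0_iff_char_dvd)
qed

lemma odd_choose_even: "even n \<Longrightarrow> odd (n choose i) \<Longrightarrow> even i"
  using binom_par by (metis evenE oddE)

theorem theoremB:
  fixes n :: nat
  assumes char2: "CHAR('k::field) = 2"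
    and npos: "n > 0" and neven: "even n"
  shows "(\<forall>x\<in>kvec (length (phi_odd n :: 'k list)). \<forall>y\<in>kvec (length (phi_odd n :: 'k list)).
            diag_form (phi_odd n :: 'k list) x y = 0)
       \<and> nondeg_part_iso (length (phi_even n :: 'k list)) (diag_form (phi_even n :: 'k list))
            (2 ^ (bitcount n - 1)) (diag_form (replicate (2 ^ (bitcount n - 1)) (1::'k)))"
proof
  define P' where "P' = filter (\<lambda>i. odd i \<and> 2 * i < n) [0..<n]"
  have z: "(phi_odd n :: 'k list) ! i = 0" if "i < length (phi_odd n :: 'k list)" for i
  proof -
    have i: "i < length P'" using that unfolding phi_odd_def P'_def by simp
    then have "P'!i \<in> set P'" by simp
    then have "odd (P'!i)" unfolding P'_def by simp
    then have "even (n choose (P'!i))" using odd_choose_even[OF neven] by blast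
    then show ?thesis using i char2_of_nat[OF char2] unfolding phi_odd_def P'_def[symmetric] by simp
  qed
  show "\<forall>x\<in>kvec (length (phi_odd n :: 'k list)). \<forall>y\<in>kvec (length (phi_odd n :: 'k list)).
            diag_form (phi_odd n :: 'k list) x y = 0"
    unfolding diag_form_def using z by simp
next
  define P where "P = filter (\<lambda>i. even i \<and> 2 * i < n) [0..<n]"
  define a where "a = (phi_even n :: 'k list)"
  have a: "a = map (\<lambda>i. of_nat (n choose i)) P" unfolding a_def phi_even_def P_def ..
  have a01: "\<forall>i<length a. a!i = 0 \<or> a!i = 1" unfolding a using char2_of_nat[OF char2] by simp
  have S: "{i. i < length a \<and> a!i = 1} = {i. i < length P \<and> odd (n choose (P!i))}"
    unfolding a using char2_of_nat[OF char2] by auto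
  have dP: "distinct P" unfolding P_def by simp
  have injP: "inj_on (nth P) {i. i < length P \<and> odd (n choose (P!i))}"
    by (rule inj_on_nth[OF dP]) simp
  have im: "nth P ` {i. i < length P \<and> odd (n choose (P!i))} = {i. 2*i < n \<and> odd (n choose i)}"
  proof (rule set_eqI, rule iffI)
    fix x assume "x \<in> nth P ` {i. i < length P \<and> odd (n choose (P!i))}"
    then obtain i where i: "i < length P" "odd (n choose (P!i))" "x = P!i" by blast
    then have "P!i \<in> set P" by simp
    then show "x \<in> {i. 2*i < n \<and> odd (n choose i)}" using i unfolding P_def by simp
  next
    fix x assume x: "x \<in> {i. 2*i < n \<and> odd (n choose i)}"
    then have "even x" using odd_choose_even[OF neven] by blast
    then have "x \<in> set P" using x unfolding P_def by auto
    then obtain i where "i < length P" "P!i = x" by (metis in_set_conv_nth)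
    then show "x \<in> nth P ` {i. i < length P \<and> odd (n choose (P!i))}" using x by auto
  qed
  have card: "card {i. i < length a \<and> a!i = 1} = 2 ^ (bitcount n - 1)"
    unfolding S card_image[OF injP, symmetric] im using count_half[OF npos] .
  show "nondeg_part_iso (length (phi_even n :: 'k list)) (diag_form (phi_even n :: 'k list))
            (2 ^ (bitcount n - 1)) (diag_form (replicate (2 ^ (bitcount n - 1)) (1::'k)))"
    using nondeg_01[OF a01, unfolded card] unfolding a_def .
qed

end
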